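(* Let $\mathbb{F}_4=\{0,1,\omega,\omega+1\}$ be the field with four elements, where $\omega^2=\omega+1$. The irreducible $\lambda$-quiddities over $\mathbb{F}_4$ are exactly, up to cyclic permutation, the following tuples: - $(1,1,1)$; - $(0,0,0,0)$, $(0,\omega,0,\omega)$, $(0,\omega+1,0,\omega+1)$; - $(\omega,\omega,\omega,\omega,\omega)$, $(\omega+1,\omega+1,\omega+1,\omega+1,\omega+1)$; - $(\omega,\omega+1,\omega,\omega+1,\omega,\omega+1)$; - $(\omega,\omega,\omega+1,\omega+1,\omega,\omega,\omega+1,\omega+1)$; - $(\omega,\omega,\omega+1,\omega,\omega,\omega+1,\omega,\omega,\omega+1)$ and $(\omega+1,\omega+1,\omega,\omega+1,\omega+1,\omega,\omega+1,\omega+1,\omega)$.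
   Context: All rings are commutative with unit. For $a_1,\ldots,a_n\in A$, $M_n(a_1,\ldots,a_n)=\begin{pmatrix}a_n&-1\\1&0\end{pmatrix}\cdots\begin{pmatrix}a_1&-1\\1&0\end{pmatrix}$. An $n$-tuple $(a_1,\ldots,a_n)\in A^n$ is a $\lambda$-quiddity over $A$ if $M_n(a_1,\ldots,a_n)=\pm\mathrm{Id}$. For $(a_1,\ldots,a_n)\in A^n$, $(b_1,\ldots,b_m)\in A^m$, define $(a_1,\ldots,a_n)\oplus(b_1,\ldots,b_m)=(a_1+b_m,a_2,\ldots,a_{n-1},a_n+b_1,b_2,\ldots,b_{m-1})$. Write $(a_1,\ldots,a_n)\sim(b_1,\ldots,b_n)$ if $(b_1,\ldots,b_n)$ is obtained from $(a_1,\ldots,a_n)$ or from $(a_n,\ldots,a_1)$ by a cyclic permutation. A $\lambda$-quiddity $(c_1,\ldots,c_n)$ with $n\ge3$ is reducible if there exist a $\lambda$-quiddity $(b_1,\ldots,b_l)$ and a tuple $(a_1,\ldots,a_m)$ with $l,m\ge3$ and $(c_1,\ldots,c_n)\sim(a_1,\ldots,a_m)\oplus(b_1,\ldots,b_l)$; it is irreducible otherwise (by convention $(0,0)$ is reducible). *)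

theory Defs
  imports Main
begin

datatype f4 = F0 | F1 | W | W1
  \<comment> \<open>F0 = 0, F1 = 1, W = \<omega>, W1 = \<omega>+1\<close>

fun f4_add :: "f4 \<Rightarrow> f4 \<Rightarrow> f4" where
  "f4_add F0 y = y"
| "f4_add x F0 = x"
| "f4_add F1 F1 = F0" | "f4_add F1 W = W1" | "f4_add F1 W1 = W"
| "f4_add W F1 = W1" | "f4_add W W = F0" | "f4_add W W1 = F1"
| "f4_add W1 F1 = W" | "f4_add W1 W = F1" | "f4_add W1 W1 = F0"

fun f4_mul :: "f4 \<Rightarrow> f4 \<Rightarrow> f4" where
  "f4_mul F0 y = F0"
| "f4_mul x F0 = F0"
| "f4_mul F1 y = y"
| "f4_mul x F1 = x"
| "f4_mul W W = W1" | "f4_mul W W1 = F1"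
| "f4_mul W1 W = F1" | "f4_mul W1 W1 = W"

fun f4_inv :: "f4 \<Rightarrow> f4" where
  "f4_inv F0 = F0" | "f4_inv F1 = F1" | "f4_inv W = W1" | "f4_inv W1 = W"

lemma f4_All: "(\<forall>x. P x) \<longleftrightarrow> P F0 \<and> P F1 \<and> P W \<and> P W1"
  by (metis f4.exhaust)

instantiation f4 :: field
begin
definition "0 = F0"
definition "1 = F1"
definition "x + y = f4_add x y"
definition "x * y = f4_mul x y"
definition "uminus x = (x :: f4)"
definition "x - y = f4_add x y"
definition "inverse x = f4_inv x"
definition "x div y = f4_mul x (f4_inv y)"
instance
  apply standard
  apply (unfold zero_f4_def one_f4_def plus_f4_def times_f4_def uminus_f4_def
      minus_f4_def inverse_f4_def divide_f4_def)
  apply (((atomize (full))?, simp add: f4_All)+)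
  done
end

definition omega :: f4 ("\<omega>") where "\<omega> = W"

lemma omega_sq: "\<omega> * \<omega> = \<omega> + 1"
  by (simp add: omega_def times_f4_def plus_f4_def one_f4_def)

type_synonym 'a mat2 = "'a \<times> 'a \<times> 'a \<times> 'a"  \<comment> \<open>(m11, m12, m21, m22)\<close>

definition mat2_mult :: "'a::comm_ring_1 mat2 \<Rightarrow> 'a mat2 \<Rightarrow> 'a mat2" where
  "mat2_mult A B = (case A of (a11,a12,a21,a22) \<Rightarrow> case B of (b11,b12,b21,b22) \<Rightarrow>
     (a11*b11 + a12*b21, a11*b12 + a12*b22, a21*b11 + a22*b21, a21*b12 + a22*b22))"

definition mat2_id :: "'a::comm_ring_1 mat2" where "mat2_id = (1, 0, 0, 1)"

definition elem_mat :: "'a::comm_ring_1 \<Rightarrow> 'a mat2" where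
  "elem_mat a = (a, -1, 1, 0)"

text \<open>M(a_1,...,a_n) = E(a_n) ... E(a_1).\<close>
fun Mq :: "'a::comm_ring_1 list \<Rightarrow> 'a mat2" where
  "Mq [] = mat2_id"
| "Mq (x # xs) = mat2_mult (Mq xs) (elem_mat x)"

definition lambda_quiddity :: "'a::comm_ring_1 list \<Rightarrow> bool" where
  "lambda_quiddity c \<longleftrightarrow> Mq c = mat2_id \<or> Mq c = (-1, 0, 0, -1)"

text \<open>(a_1..a_m) \<oplus> (b_1..b_l) = (a_1+b_l, a_2..a_{m-1}, a_m+b_1, b_2..b_{l-1})\<close>
definition qsum :: "'a::comm_ring_1 list \<Rightarrow> 'a list \<Rightarrow> 'a list" where
  "qsum a b = [a ! 0 + b ! (length b - 1)] @ take (length a - 2) (drop 1 a)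
              @ [a ! (length a - 1) + b ! 0] @ take (length b - 2) (drop 1 b)"

definition tuple_equiv :: "'a list \<Rightarrow> 'a list \<Rightarrow> bool" where
  "tuple_equiv a b \<longleftrightarrow> (\<exists>k. b = rotate k a \<or> b = rotate k (rev a))"

definition reducible :: "'a::comm_ring_1 list \<Rightarrow> bool" where
  "reducible c \<longleftrightarrow> c = [0, 0] \<or>
     (\<exists>a b. lambda_quiddity b \<and> length b \<ge> 3 \<and> length a \<ge> 3 \<and> tuple_equiv c (qsum a b))"

definition irreducible_quiddity :: "'a::comm_ring_1 list \<Rightarrow> bool" where
  "irreducible_quiddity c \<longleftrightarrow> lambda_quiddity c \<and> length c \<ge> 3 \<and> \<not> reducible c"

end

theory Submission
  imports Defs
begin

lemma mat2_mult_assoc: "mat2_mult (mat2_mult A B) C = mat2_mult A (mat2_mult B C)"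
  by (cases A; cases B; cases C) (simp add: mat2_mult_def algebra_simps)

lemma mat2_mult_id: "mat2_mult A mat2_id = A" "mat2_mult mat2_id A = A"
  by (cases A; simp add: mat2_mult_def mat2_id_def)+

lemma Mq_append: "Mq (xs @ ys) = mat2_mult (Mq ys) (Mq xs)"
  by (induction xs) (simp_all add: mat2_mult_id mat2_mult_assoc)

lemma Mq_det: "Mq w = (p,q,r,s) \<Longrightarrow> p*s - q*r = 1"
proof (induction w arbitrary: p q r s)
  case Nil then show ?case by (simp add: mat2_id_def)
next
  case (Cons x w)
  obtain p' q' r' s' where e: "Mq w = (p',q',r',s')" by (cases "Mq w") auto
  from Cons.IH[OF e] Cons.prems e show ?case
    by (auto simp: mat2_mult_def elem_mat_def algebra_simps)
qed

definition redg :: "'a::comm_ring_1 list \<Rightarrow> bool" where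
  "redg w \<longleftrightarrow> fst (Mq w) = 1 \<or> fst (Mq w) = -1"

lemma Mq_wrap: "Mq (x # w @ [y]) = mat2_mult (elem_mat y) (mat2_mult (Mq w) (elem_mat x))"
  using Mq_append[of w "[y]"] by (simp add: mat2_mult_id mat2_mult_assoc)

lemma win_quid: "(\<exists>x y. lambda_quiddity (x # w @ [y])) \<longleftrightarrow> redg w"
proof -
  obtain p q r s where e: "Mq w = (p,q,r,s)" by (cases "Mq w") auto
  have d: "p*s - q*r = 1" by (rule Mq_det[OF e])
  show ?thesis
  proof
    assume "\<exists>x y. lambda_quiddity (x # w @ [y])"
    then obtain x y where "lambda_quiddity (x # w @ [y])" by blast
    then show "redg w" using e unfolding lambda_quiddity_def Mq_wrap
      by (auto simp: lambda_quiddity_def Mq_wrap redg_def mat2_mult_def elem_mat_def mat2_id_def minus_equation_iff)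
  next
    assume "redg w"
    then have "p = 1 \<or> p = -1" using e by (simp add: redg_def)
    then show "\<exists>x y. lambda_quiddity (x # w @ [y])"
    proof
      assume p: "p = 1"
      have "lambda_quiddity ((-q) # w @ [r])"
        using e d p unfolding lambda_quiddity_def Mq_wrap by (simp add: mat2_mult_def elem_mat_def mat2_id_def algebra_simps)
      then show ?thesis by blast
    next
      assume p: "p = -1"
      have "lambda_quiddity (q # w @ [-r])"
        using e d p unfolding lambda_quiddity_def Mq_wrap by (simp add: mat2_mult_def elem_mat_def mat2_id_def algebra_simps)
      then show ?thesis by blast
    qed
  qed
qed


definition cwin :: "'a::comm_ring_1 list \<Rightarrow> bool" where
  "cwin c \<longleftrightarrow> (\<exists>r k. 1 \<le> k \<and> k + 3 \<le> length c \<and>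
     (redg (drop (length c - k) (rotate r c)) \<or> redg (drop (length c - k) (rotate r (rev c)))))"

lemma qsum_split:
  "qsum (a0 # A @ [am]) (b0 # w @ [bl]) = ((a0 + bl) # A @ [am + b0]) @ w"
  by (simp add: qsum_def nth_append)

lemma reducible_iff:
  fixes c :: "'a::comm_ring_1 list"
  assumes n: "length c \<ge> 3"
  shows "reducible c \<longleftrightarrow> cwin c"
proof
  assume "reducible c"
  then obtain a b where qb: "lambda_quiddity b" and lb: "length b \<ge> 3" and la: "length a \<ge> 3"
    and te: "tuple_equiv c (qsum a b)" using n unfolding reducible_def by auto
  obtain k where rk: "qsum a b = rotate k c \<or> qsum a b = rotate k (rev c)"
    using te unfolding tuple_equiv_def by blast
  obtain b0 B' where b1: "b = b0 # B'" using lb by (cases b) auto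
  obtain w bl where b2: "B' = w @ [bl]" using lb b1 by (cases B' rule: rev_exhaust) auto
  obtain a0 A' where a1: "a = a0 # A'" using la by (cases a) auto
  obtain A am where a2: "A' = A @ [am]" using la a1 by (cases A' rule: rev_exhaust) auto
  have q: "qsum a b = ((a0 + bl) # A @ [am + b0]) @ w"
    using qsum_split a1 a2 b1 b2 by simp
  have lc: "length c = length a + length w"
  proof -
    have "length (qsum a b) = length c" using rk by auto
    then show ?thesis using q a1 a2 by simp
  qed
  have rw: "redg w" using win_quid[of w] qb b1 b2 by blast
  have dw: "drop (length c - length w) (qsum a b) = w" using q lc a1 a2 by simp
  have "1 \<le> length w" "length w + 3 \<le> length c" using lb la b1 b2 lc by auto
  then show "cwin c" unfolding cwin_def using rk dw rw by metis
next
  assume "cwin c"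
  then obtain r k v where k1: "1 \<le> k" and k3: "k + 3 \<le> length c"
    and v: "v = rotate r c \<or> v = rotate r (rev c)" and rv: "redg (drop (length c - k) v)"
    unfolding cwin_def by blast
  have lv: "length v = length c" using v by auto
  define m where "m = length c - k"
  define w where "w = drop m v"
  define P where "P = take m v"
  have vP: "v = P @ w" unfolding P_def w_def by simp
  have lP: "length P = m" "m \<ge> 3" "length w = k" using lv k1 k3 unfolding P_def m_def w_def by auto
  obtain x y where qb: "lambda_quiddity (x # w @ [y])" using win_quid[of w] rv unfolding w_def m_def by blast
  obtain p0 P' where p1: "P = p0 # P'" using lP by (cases P) auto
  obtain Q p1 where p2: "P' = Q @ [p1]" using lP p1 by (cases P' rule: rev_exhaust) auto
  define a where "a = (p0 - y) # Q @ [p1 - x]"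
  have "qsum a (x # w @ [y]) = v" unfolding a_def qsum_split vP p1 p2 by simp
  moreover have "length a \<ge> 3" "length (x # w @ [y]) \<ge> 3" using lP p1 p2 k1 unfolding a_def by auto
  ultimately show "reducible c" unfolding reducible_def tuple_equiv_def using qb v by metis
qed


lemma f4_neg: "-(x::f4) = x" by (simp add: uminus_f4_def)

definition red :: "f4 list \<Rightarrow> bool" where "red w \<longleftrightarrow> fst (Mq w) = 1"

lemma redg_f4: "redg (w::f4 list) \<longleftrightarrow> red w" by (simp add: redg_def red_def f4_neg)

definition cwin_exec :: "f4 list \<Rightarrow> bool" where
  "cwin_exec c \<longleftrightarrow> (\<exists>r\<in>set [0..<length c]. \<exists>k\<in>set [1..<length c - 2].
     red (drop (length c - k) (rotate r c)) \<or> red (drop (length c - k) (rotate r (rev c))))"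

lemma cwin_exec: assumes n: "length c \<ge> 3" shows "cwin c \<longleftrightarrow> cwin_exec c"
proof
  assume "cwin c"
  then obtain r k where k: "1 \<le> k" "k + 3 \<le> length c" and
    h: "red (drop (length c - k) (rotate r c)) \<or> red (drop (length c - k) (rotate r (rev c)))"
    unfolding cwin_def redg_f4 by blast
  have e1: "rotate r c = rotate (r mod length c) c" by (rule rotate_conv_mod)
  have e2: "rotate r (rev c) = rotate (r mod length c) (rev c)" using rotate_conv_mod[of r "rev c"] by simp
  have "r mod length c \<in> set [0..<length c]" proof -
    have "c \<noteq> []" using n by (cases c) auto
    then show ?thesis by simp
  qed
  moreover have "k \<in> set [1..<length c - 2]" using k by auto
  ultimately show "cwin_exec c" unfolding cwin_exec_def using h e1 e2 by metis
next
  assume "cwin_exec c"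
  then obtain r k where k: "k \<in> set [1..<length c - 2]" and
    h: "red (drop (length c - k) (rotate r c)) \<or> red (drop (length c - k) (rotate r (rev c)))"
    unfolding cwin_exec_def by blast
  from k have "1 \<le> k" "k + 3 \<le> length c" by auto
  then show "cwin c" unfolding cwin_def redg_f4 using h by blast
qed

definition irr_exec :: "f4 list \<Rightarrow> bool" where
  "irr_exec c \<longleftrightarrow> 3 \<le> length c \<and> Mq c = mat2_id \<and> \<not> cwin_exec c"
definition targets :: "f4 list list" where "targets = [[1,1,1],
               [0,0,0,0], [0,\<omega>,0,\<omega>], [0,\<omega>+1,0,\<omega>+1],
               [\<omega>,\<omega>,\<omega>,\<omega>,\<omega>], [\<omega>+1,\<omega>+1,\<omega>+1,\<omega>+1,\<omega>+1],
               [\<omega>,\<omega>+1,\<omega>,\<omega>+1,\<omega>,\<omega>+1],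
               [\<omega>,\<omega>,\<omega>+1,\<omega>+1,\<omega>,\<omega>,\<omega>+1,\<omega>+1],
               [\<omega>,\<omega>,\<omega>+1,\<omega>,\<omega>,\<omega>+1,\<omega>,\<omega>,\<omega>+1],
               [\<omega>+1,\<omega>+1,\<omega>,\<omega>+1,\<omega>+1,\<omega>,\<omega>+1,\<omega>+1,\<omega>]]"
definition ok :: "nat \<Rightarrow> f4 list \<Rightarrow> bool" where
  "ok K v \<longleftrightarrow> (\<forall>i \<in> set [0..<length v]. length v - i \<le> K \<longrightarrow> \<not> red (drop i v))"

fun gen :: "nat \<Rightarrow> nat \<Rightarrow> f4 list list" where
  "gen K 0 = [[]]"
| "gen K (Suc n) = concat (map (\<lambda>w. filter (ok K) (map (\<lambda>x. w @ [x]) [F0,F1,W,W1])) (gen K n))"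

definition nw :: "nat \<Rightarrow> f4 list \<Rightarrow> bool" where
  "nw K v \<longleftrightarrow> (\<forall>i j. i < j \<longrightarrow> j \<le> length v \<longrightarrow> j - i \<le> K \<longrightarrow> \<not> red (drop i (take j v)))"

lemma gen_complete: "length v = n \<Longrightarrow> nw K v \<Longrightarrow> v \<in> set (gen K n)"
proof (induction n arbitrary: v)
  case 0 then show ?case by (simp add: gen.simps)
next
  case (Suc n)
  obtain u x where v: "v = u @ [x]" using Suc.prems by (cases v rule: rev_exhaust) auto
  have lu: "length u = n" using v Suc.prems by simp
  have "nw K u" unfolding nw_def
  proof (intro allI impI)
    fix i j assume "i < j" "j \<le> length u" "j - i \<le> K"
    moreover have "j \<le> length v" using \<open>j \<le> length u\<close> v by simp
    ultimately have "\<not> red (drop i (take j v))" using Suc.prems(2) unfolding nw_def by blast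
    moreover have "take j v = take j u" using \<open>j \<le> length u\<close> v by simp
    ultimately show "\<not> red (drop i (take j u))" by simp
  qed
  then have u: "u \<in> set (gen K n)" using Suc.IH lu by blast
  have "ok K v" unfolding ok_def
  proof (intro ballI impI)
    fix i assume "i \<in> set [0..<length v]" "length v - i \<le> K"
    then have "i < length v" "length v - i \<le> K" by auto
    then have "\<not> red (drop i (take (length v) v))" using Suc.prems(2) unfolding nw_def by blast
    then show "\<not> red (drop i v)" by simp
  qed
  moreover have "x \<in> set [F0,F1,W,W1]" by (cases x) auto
  ultimately show ?case using u v by auto
qed

lemma nw_take: "nw K v \<Longrightarrow> K' \<le> K \<Longrightarrow> nw K' (take m v)"
  unfolding nw_def by (auto simp: min_def)

lemma win_rot: assumes "i < j" "j \<le> length c" shows "drop (length c - (j - i)) (rotate j c) = drop i (take j c)"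
proof (cases "j = length c")
  case True
  then show ?thesis using assms by simp
next
  case False
  then have "j < length c" using assms by simp
  then have "rotate j c = drop j c @ take j c" by (simp add: rotate_drop_take)
  then show ?thesis using \<open>i < j\<close> \<open>j < length c\<close> by simp
qed

lemma lq_f4: "lambda_quiddity (c::f4 list) \<longleftrightarrow> Mq c = mat2_id"
  by (simp add: lambda_quiddity_def mat2_id_def f4_neg)

lemma irr_iff: "irreducible_quiddity c \<longleftrightarrow> irr_exec c"
  unfolding irreducible_quiddity_def irr_exec_def lq_f4
  using reducible_iff[of c] cwin_exec[of c] by auto

lemma irr_nw: assumes "irr_exec c" shows "nw (length c - 3) c"
  unfolding nw_def
proof (intro allI impI)
  fix i j assume ij: "i < j" "j \<le> length c" "j - i \<le> length c - 3"
  have n: "length c \<ge> 3" and nc: "\<not> cwin c" using assms cwin_exec[of c] unfolding irr_exec_def by auto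
  have "\<not> redg (drop (length c - (j - i)) (rotate j c))"
    proof -
    have "1 \<le> j - i" "j - i + 3 \<le> length c" using ij n by auto
    then show ?thesis using nc unfolding cwin_def by blast
  qed
  then show "\<not> red (drop i (take j c))" using win_rot[OF ij(1,2)] by (simp add: redg_f4)
qed

lemma ex_rot: "[] \<notin> set ts \<Longrightarrow> (\<exists>t\<in>set ts. \<exists>k. c = rotate k t) \<longleftrightarrow> (\<exists>t\<in>set ts. \<exists>k\<in>set [0..<length t]. c = rotate k t)"
  by (metis atLeastLessThan_iff length_greater_0_conv mod_less_divisor rotate_conv_mod set_upt zero_le)

lemma c0: "gen 7 10 = []" by code_simp

lemma c1: "list_all (\<lambda>n. list_all (\<lambda>c. irr_exec c \<longrightarrow> (\<exists>t \<in> set targets.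
       \<exists>k\<in>set [0..<length t]. c = rotate k t)) (gen (n-3) n)) [3..<10]" by code_simp

lemma c2: "list_all (\<lambda>t. list_all (\<lambda>k. irr_exec (rotate k t)) [0..<length t]) targets" by code_simp

theorem theorem2p7:
  fixes c :: "f4 list"
  shows "irreducible_quiddity c \<longleftrightarrow>
    (\<exists>t \<in> set [[1,1,1],
               [0,0,0,0], [0,\<omega>,0,\<omega>], [0,\<omega>+1,0,\<omega>+1],
               [\<omega>,\<omega>,\<omega>,\<omega>,\<omega>], [\<omega>+1,\<omega>+1,\<omega>+1,\<omega>+1,\<omega>+1],
               [\<omega>,\<omega>+1,\<omega>,\<omega>+1,\<omega>,\<omega>+1],
               [\<omega>,\<omega>,\<omega>+1,\<omega>+1,\<omega>,\<omega>,\<omega>+1,\<omega>+1],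
               [\<omega>,\<omega>,\<omega>+1,\<omega>,\<omega>,\<omega>+1,\<omega>,\<omega>,\<omega>+1],
               [\<omega>+1,\<omega>+1,\<omega>,\<omega>+1,\<omega>+1,\<omega>,\<omega>+1,\<omega>+1,\<omega>]].
       \<exists>k. c = rotate k t)"
  unfolding targets_def[symmetric] irr_iff
proof -
  have ne: "[] \<notin> set targets" by (simp add: targets_def)
  show "irr_exec c \<longleftrightarrow> (\<exists>t\<in>set targets. \<exists>k. c = rotate k t)"
    unfolding ex_rot[OF ne]
  proof
    assume ic: "irr_exec c"
    have n3: "length c \<ge> 3" using ic by (simp add: irr_exec_def)
    have nw: "nw (length c - 3) c" by (rule irr_nw[OF ic])
    show "\<exists>t\<in>set targets. \<exists>k\<in>set [0..<length t]. c = rotate k t"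
    proof (cases "length c \<ge> 10")
      case True
      have "nw 7 (take 10 c)" using nw_take[OF nw, of 7 10] True by simp
      then have "take 10 c \<in> set (gen 7 10)" using gen_complete True by simp
      then show ?thesis using c0 by simp
    next
      case False
      have "c \<in> set (gen (length c - 3) (length c))" using gen_complete nw by blast
      moreover have "length c \<in> set [3..<10]" using False n3 by (simp only: set_upt atLeastLessThan_iff) simp
      ultimately show ?thesis using c1 ic unfolding list_all_iff by blast
    qed
  next
    assume "\<exists>t\<in>set targets. \<exists>k\<in>set [0..<length t]. c = rotate k t"
    then show "irr_exec c" using c2 unfolding list_all_iff by blast
  qed
qed

end
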